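(* Let $(X,\langle\cdot,\cdot\rangle)$ be a real inner product space. For every $n\ge 2$, the $n$-iterated $2$-inner product $(\cdot,\cdot\mid\cdot,\ldots,\cdot)_*:X^{n+1}\to\mathbb{R}$ is a weak $n$-inner product on $X$.
   Context: The $n$-iterated $2$-inner product is defined recursively: for $n=2$, $(x,y\mid z)_*:=\langle x,y\rangle\langle z,z\rangle-\langle x,z\rangle\langle z,y\rangle$; for $n\ge3$ and $x,y,x_2,\ldots,x_n\in X$, $(x,y\mid x_n,\ldots,x_2)_*:=(x,y\mid x_{n-1},\ldots,x_2)_*\,(x_n,x_n\mid x_{n-1},\ldots,x_2)_*-(x,x_n\mid x_{n-1},\ldots,x_2)_*\,(x_n,y\mid x_{n-1},\ldots,x_2)_*$. A weak $n$-inner product ($n\ge2$) on a real vector space $X$ is a function $(\cdot,\cdot\mid\cdot,\ldots,\cdot):X^{n+1}\to\mathbb{R}$, written $(x,y\mid x_n,\ldots,x_2)$, such that for all $x,x',y,x_2,\ldots,x_n\in X$ and $\alpha\in\mathbb{R}$: (P1) $(x,x\mid x_n,\ldots,x_2)\ge 0$, with equality if and only if $x,x_2,\ldots,x_n$ are linearly dependent; (P2) $(x,x\mid x_n,\ldots,x_2)=(x_n,x_n\mid x,x_{n-1},\ldots,x_2)$; (P3) $(x,y\mid x_n,\ldots,x_2)=(y,x\mid x_n,\ldots,x_2)$; (P4) $(\alpha x,y\mid x_n,\ldots,x_2)=\alpha(x,y\mid x_n,\ldots,x_2)$; (P5) $(x+x',y\mid x_n,\ldots,x_2)=(x,y\mid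 x_n,\ldots,x_2)+(x',y\mid x_n,\ldots,x_2)$. *)

theory Defs
  imports "HOL-Analysis.Analysis"
begin

text \<open>The arguments x_2,...,x_n are given by a function v :: nat => 'a, using
  v 2, ..., v n (other values are irrelevant).  iter_ip n v x y stands for
  (x, y | x_n, ..., x_2)_* .  For n <= 2 the base case (n = 2) is used.\<close>

fun iter_ip :: "nat \<Rightarrow> (nat \<Rightarrow> 'a::real_inner) \<Rightarrow> 'a \<Rightarrow> 'a \<Rightarrow> real" where
  "iter_ip (Suc (Suc (Suc m))) v x y =
     iter_ip (Suc (Suc m)) v x y * iter_ip (Suc (Suc m)) v (v (Suc (Suc (Suc m)))) (v (Suc (Suc (Suc m))))
   - iter_ip (Suc (Suc m)) v x (v (Suc (Suc (Suc m)))) * iter_ip (Suc (Suc m)) v (v (Suc (Suc (Suc m)))) y"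
| "iter_ip _ v x y = inner x y * inner (v 2) (v 2) - inner x (v 2) * inner (v 2) y"

text \<open>x, x_2, ..., x_n linearly dependent (as a family, repetitions allowed):
  w 1 = x, w i = v i for 2 <= i <= n.\<close>
definition lin_dep_family :: "nat \<Rightarrow> 'a::real_vector \<Rightarrow> (nat \<Rightarrow> 'a) \<Rightarrow> bool" where
  "lin_dep_family n x v \<longleftrightarrow>
     (\<exists>c :: nat \<Rightarrow> real. (\<exists>i\<in>{1..n}. c i \<noteq> 0) \<and>
        (\<Sum>i=1..n. c i *\<^sub>R ((v(1 := x)) i)) = 0)"

text \<open>F n v x y stands for (x, y | x_n, ..., x_2) with x_i = v i.\<close>
definition weak_n_inner_product :: "nat \<Rightarrow> ((nat \<Rightarrow> 'a::real_vector) \<Rightarrow> 'a \<Rightarrow> 'a \<Rightarrow> real) \<Rightarrow> bool" where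
  "weak_n_inner_product n F \<longleftrightarrow> 2 \<le> n \<and>
     (\<forall>v x. F v x x \<ge> 0 \<and> (F v x x = 0 \<longleftrightarrow> lin_dep_family n x v)) \<and>
     (\<forall>v x. F v x x = F (v(n := x)) (v n) (v n)) \<and>
     (\<forall>v x y. F v x y = F v y x) \<and>
     (\<forall>v x y (a::real). F v (a *\<^sub>R x) y = a * F v x y) \<and>
     (\<forall>v x x' y. F v (x + x') y = F v x y + F v x' y)"

end

theory Submission
  imports Defs
begin

definition sbf :: "('a::real_vector \<Rightarrow> 'a \<Rightarrow> real) \<Rightarrow> bool" where
  "sbf B \<longleftrightarrow> (\<forall>x y. B x y = B y x) \<and> (\<forall>a x y. B (a *\<^sub>R x) y = a * B x y)
     \<and> (\<forall>x x' y. B (x + x') y = B x y + B x' y) \<and> (\<forall>x. B x x \<ge> 0)"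

definition stp :: "('a \<Rightarrow> 'a \<Rightarrow> real) \<Rightarrow> 'a \<Rightarrow> 'a \<Rightarrow> 'a \<Rightarrow> real" where
  "stp B z = (\<lambda>x y. B x y * B z z - B x z * B z y)"

fun J :: "nat \<Rightarrow> (nat \<Rightarrow> 'a::real_inner) \<Rightarrow> 'a \<Rightarrow> 'a \<Rightarrow> real" where
  "J 0 v = inner"
| "J (Suc 0) v = inner"
| "J (Suc (Suc k)) v = stp (J (Suc k) v) (v (Suc (Suc k)))"

lemma J_Suc: "1 \<le> k \<Longrightarrow> J (Suc k) v = stp (J k v) (v (Suc k))"
  by (cases k) auto

lemma iter_J: "2 \<le> k \<Longrightarrow> iter_ip k v = J k v"
proof (induction k rule: nat_induct_at_least)
  case base
  show ?case by (auto simp: stp_def numeral_2_eq_2 fun_eq_iff)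
next
  case (Suc n)
  then obtain m where m: "n = Suc (Suc m)" by (metis add_2_eq_Suc le_iff_add)
  show ?case using Suc by (simp add: m stp_def fun_eq_iff)
qed

lemma J_indep: "k < j \<Longrightarrow> J k (v(j := a)) = J k v"
proof (induction k)
  case (Suc k)
  then show ?case by (cases k) auto
qed simp

lemma sbf_inner: "sbf (inner :: 'a::real_inner \<Rightarrow> 'a \<Rightarrow> real)"
  unfolding sbf_def by (simp add: inner_add_left inner_add_right inner_commute)

lemma sbf_sym: "sbf B \<Longrightarrow> B x y = B y x" unfolding sbf_def by blast
lemma sbf_scale: "sbf B \<Longrightarrow> B (a *\<^sub>R x) y = a * B x y" unfolding sbf_def by blast
lemma sbf_add: "sbf B \<Longrightarrow> B (x + x') y = B x y + B x' y" unfolding sbf_def by blast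
lemma sbf_nn: "sbf B \<Longrightarrow> B x x \<ge> 0" unfolding sbf_def by blast
lemma sbf_scale_r: "sbf B \<Longrightarrow> B y (a *\<^sub>R x) = a * B y x"
  by (metis sbf_sym sbf_scale)
lemma sbf_add_r: "sbf B \<Longrightarrow> B y (x + x') = B y x + B y x'"
  by (metis sbf_sym sbf_add)
lemma sbf_diff: assumes b: "sbf B" shows "B (x - x') y = B x y - B x' y"
proof -
  have "B (x - x') y = B (x + (-1) *\<^sub>R x') y" by simp
  also have "\<dots> = B x y - B x' y" by (simp only: sbf_add[OF b] sbf_scale[OF b])
  finally show ?thesis .
qed
lemma sbf_diff_r: "sbf B \<Longrightarrow> B y (x - x') = B y x - B y x'"
  by (metis sbf_sym sbf_diff)

lemma sbf_expand:
  assumes b: "sbf B"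
  shows "B (x - t *\<^sub>R z) (x - t *\<^sub>R z) = B x x - 2*t*B x z + t^2 * B z z"
  using b by (simp add: sbf_diff sbf_diff_r sbf_scale sbf_scale_r sbf_sym[of B z x]
      power2_eq_square algebra_simps)

lemma sbf_CS:
  assumes b: "sbf B"
  shows "(B x z)^2 \<le> B x x * B z z"
proof (cases "B z z = 0")
  case True
  show ?thesis
  proof (rule ccontr)
    assume "\<not> ?thesis"
    then have ne: "B x z \<noteq> 0" using True by simp
    define t where "t = (B x x + 1) / (2 * B x z)"
    have "0 \<le> B (x - t *\<^sub>R z) (x - t *\<^sub>R z)" using b sbf_nn by blast
    also have "\<dots> = B x x - 2*t*B x z" using sbf_expand[OF b] True by simp
    also have "\<dots> = -1" using ne by (simp add: t_def field_simps)
    finally show False by simp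
  qed
next
  case False
  then have pos: "B z z > 0" using sbf_nn[OF b, of z] by simp
  define t where "t = B x z / B z z"
  have "0 \<le> B (x - t *\<^sub>R z) (x - t *\<^sub>R z)" using b sbf_nn by blast
  also have "\<dots> = B x x - 2*t*B x z + t^2 * B z z" using sbf_expand[OF b] by simp
  also have "\<dots> = B x x - (B x z)^2 / B z z" using pos
    by (simp add: t_def field_simps power2_eq_square)
  finally have "(B x z)^2 / B z z \<le> B x x" by simp
  then show ?thesis using pos by (simp add: divide_le_eq mult.commute)
qed

lemma sbf_null:
  assumes b: "sbf B" and w: "B w w = 0"
  shows "B w y = 0"
  using sbf_CS[OF b, of w y] w sbf_nn[OF b, of y] by simp

lemma sbf_stp:
  assumes b: "sbf B"
  shows "sbf (stp B z)"
  unfolding sbf_def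
proof (intro conjI allI)
  fix x y
  show "stp B z x y = stp B z y x"
    unfolding stp_def using sbf_sym[OF b, of x y] sbf_sym[OF b, of z y] sbf_sym[OF b, of x z]
    by (simp add: mult.commute)
next
  fix a x y
  show "stp B z (a *\<^sub>R x) y = a * stp B z x y"
    unfolding stp_def by (simp add: sbf_scale[OF b] algebra_simps)
next
  fix x x' y
  show "stp B z (x + x') y = stp B z x y + stp B z x' y"
    unfolding stp_def by (simp add: sbf_add[OF b] algebra_simps)
next
  fix x
  show "0 \<le> stp B z x x"
    unfolding stp_def using sbf_CS[OF b, of x z] sbf_sym[OF b, of z x]
    by (simp add: power2_eq_square)
qed

definition ldf :: "nat \<Rightarrow> 'a::real_vector \<Rightarrow> (nat \<Rightarrow> 'a) \<Rightarrow> bool" where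
  "ldf k x v \<longleftrightarrow> (\<exists>c. (\<exists>i\<in>{1..k}. c i \<noteq> 0) \<and> c 1 *\<^sub>R x + (\<Sum>i=2..k. c i *\<^sub>R v i) = 0)"

lemma ldf_eq: "1 \<le> k \<Longrightarrow> lin_dep_family k x v = ldf k x v"
proof -
  assume k: "1 \<le> k"
  have "\<And>c. (\<Sum>i=1..k. c i *\<^sub>R ((v(1 := x)) i)) = c 1 *\<^sub>R x + (\<Sum>i=2..k. c i *\<^sub>R v i)"
  proof -
    fix c :: "nat \<Rightarrow> real"
    have "(\<Sum>i=1..k. c i *\<^sub>R ((v(1 := x)) i)) = c 1 *\<^sub>R x + (\<Sum>i=Suc 1..k. c i *\<^sub>R ((v(1 := x)) i))"
      using k by (simp add: sum.atLeast_Suc_atMost)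
    also have "(\<Sum>i=Suc 1..k. c i *\<^sub>R ((v(1 := x)) i)) = (\<Sum>i=2..k. c i *\<^sub>R v i)"
      by (rule sum.cong) auto
    finally show "?thesis c" .
  qed
  then show ?thesis by (simp add: lin_dep_family_def ldf_def)
qed

lemma sum_split: "1 \<le> k \<Longrightarrow> (\<Sum>i=2..Suc k. f i) = (\<Sum>i=2..k. f i) + f (Suc k)"
  by (simp add: sum.cl_ivl_Suc)

lemma step_zero:
  fixes v :: "nat \<Rightarrow> 'a::real_vector"
  assumes b: "sbf B" and k: "1 \<le> k" and IH: "\<forall>y. B y y = 0 \<longleftrightarrow> ldf k y v"
  shows "stp B (v (Suc k)) x x = 0 \<longleftrightarrow> ldf (Suc k) x v"
proof -
  define z where "z = v (Suc k)"
  have split: "\<And>c. (\<Sum>i=2..Suc k. c i *\<^sub>R v i) = (\<Sum>i=2..k. c i *\<^sub>R v i) + c (Suc k) *\<^sub>R z"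
    by (subst sum_split[OF k]) (simp add: z_def)
  have congd: "\<And>c d. (\<And>i. 2 \<le> i \<Longrightarrow> i \<le> k \<Longrightarrow> d i = c i) \<Longrightarrow>
      (\<Sum>i=2..k. d i *\<^sub>R v i) = (\<Sum>i=2..k. c i *\<^sub>R v i)"
    by (rule sum.cong) auto
  show ?thesis
  proof
    assume st: "stp B (v (Suc k)) x x = 0"
    show "ldf (Suc k) x v"
    proof (cases "B z z = 0")
      case True
      then obtain c where c: "\<exists>i\<in>{1..k}. c i \<noteq> 0" "c 1 *\<^sub>R z + (\<Sum>i=2..k. c i *\<^sub>R v i) = 0"
        using IH ldf_def by blast
      define d where "d = c(1 := 0, Suc k := c 1)"
      have s: "(\<Sum>i=2..k. d i *\<^sub>R v i) = (\<Sum>i=2..k. c i *\<^sub>R v i)"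
        by (rule congd) (auto simp: d_def)
      have "d 1 *\<^sub>R x + (\<Sum>i=2..Suc k. d i *\<^sub>R v i) = 0"
        using k c(2) by (simp add: split s, simp add: d_def add.commute z_def)
      moreover have "\<exists>i\<in>{1..Suc k}. d i \<noteq> 0"
      proof -
        obtain i where i: "i \<in> {1..k}" "c i \<noteq> 0" using c(1) by blast
        show ?thesis
        proof (cases "i = 1")
          case True then show ?thesis using i k by (intro bexI[of _ "Suc k"]) (auto simp: d_def)
        next
          case False then show ?thesis using i k by (intro bexI[of _ i]) (auto simp: d_def)
        qed
      qed
      ultimately show ?thesis unfolding ldf_def by blast
    next
      case False
      then have pos: "B z z > 0" using sbf_nn[OF b, of z] by simp
      define t where "t = B x z / B z z"
      define w where "w = x - t *\<^sub>R z"
      have "B w w = B x x - 2*t*B x z + t^2 * B z z" using sbf_expand[OF b] w_def by simp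
      also have "\<dots> = (B x x * B z z - B x z * B z x) / B z z" using pos
        by (simp add: t_def field_simps power2_eq_square sbf_sym[OF b, of z x])
      also have "\<dots> = 0" using st by (simp add: stp_def z_def)
      finally have "B w w = 0" .
      then obtain c where c: "\<exists>i\<in>{1..k}. c i \<noteq> 0" "c 1 *\<^sub>R w + (\<Sum>i=2..k. c i *\<^sub>R v i) = 0"
        using IH ldf_def by blast
      define d where "d = c(Suc k := - c 1 * t)"
      have s: "(\<Sum>i=2..k. d i *\<^sub>R v i) = (\<Sum>i=2..k. c i *\<^sub>R v i)"
        by (rule congd) (auto simp: d_def)
      have "d 1 *\<^sub>R x + (\<Sum>i=2..Suc k. d i *\<^sub>R v i) = c 1 *\<^sub>R w + (\<Sum>i=2..k. c i *\<^sub>R v i)"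
        using k by (simp add: split s, simp add: d_def w_def z_def algebra_simps)
      with c(2) have "d 1 *\<^sub>R x + (\<Sum>i=2..Suc k. d i *\<^sub>R v i) = 0" by simp
      moreover have "\<exists>i\<in>{1..Suc k}. d i \<noteq> 0"
      proof -
        obtain i where i: "i \<in> {1..k}" "c i \<noteq> 0" using c(1) by blast
        then show ?thesis by (intro bexI[of _ i]) (auto simp: d_def)
      qed
      ultimately show ?thesis unfolding ldf_def by blast
    qed
  next
    assume "ldf (Suc k) x v"
    then obtain c where c: "\<exists>i\<in>{1..Suc k}. c i \<noteq> 0"
      "c 1 *\<^sub>R x + (\<Sum>i=2..k. c i *\<^sub>R v i) + c (Suc k) *\<^sub>R z = 0"
      unfolding ldf_def split by (auto simp: add.assoc)
    show "stp B (v (Suc k)) x x = 0"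
    proof (cases "B z z = 0")
      case True
      have "(B x z)^2 \<le> 0" using sbf_CS[OF b, of x z] True by simp
      then have "B x z = 0" by simp
      then show ?thesis using True by (simp add: stp_def z_def)
    next
      case False
      show ?thesis
      proof (cases "c 1 = 0")
        case True
        define d where "d = c(1 := c (Suc k))"
        have s: "(\<Sum>i=2..k. d i *\<^sub>R v i) = (\<Sum>i=2..k. c i *\<^sub>R v i)"
          by (rule congd) (auto simp: d_def)
        have "d 1 *\<^sub>R z + (\<Sum>i=2..k. d i *\<^sub>R v i) = 0"
          using c(2) True by (simp add: s d_def add.commute)
        moreover have "\<exists>i\<in>{1..k}. d i \<noteq> 0"
        proof -
          obtain i where i: "i \<in> {1..Suc k}" "c i \<noteq> 0" using c(1) by blast
          show ?thesis
          proof (cases "i = Suc k")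
            case True then show ?thesis using i k by (intro bexI[of _ 1]) (auto simp: d_def)
          next
            case False then show ?thesis using i k True \<open>c 1 = 0\<close>
              by (intro bexI[of _ i]) (auto simp: d_def)
          qed
        qed
        ultimately have "ldf k z v" unfolding ldf_def by blast
        then show ?thesis using IH False by blast
      next
        case c1: False
        define s where "s = c (Suc k) / c 1"
        define w where "w = x + s *\<^sub>R z"
        have "c 1 *\<^sub>R w + (\<Sum>i=2..k. c i *\<^sub>R v i) = 0"
          using c(2) c1 by (simp add: w_def s_def algebra_simps)
        then have "ldf k w v" unfolding ldf_def using c1 k by (intro exI[of _ c]) auto
        then have ww: "B w w = 0" using IH by blast
        have x: "x = w - s *\<^sub>R z" by (simp add: w_def)
        have wz: "B w z = 0" "B z w = 0" using sbf_null[OF b ww, of z] sbf_sym[OF b, of z w] by auto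
        have bxx: "B x x = s^2 * B z z" unfolding x using sbf_expand[OF b] ww wz by simp
        have bxz: "B x z = - s * B z z" "B z x = - s * B z z" unfolding x using b wz
          by (simp_all add: sbf_diff sbf_diff_r sbf_scale sbf_scale_r)
        show ?thesis by (simp add: stp_def z_def[symmetric] bxx bxz power2_eq_square)
      qed
    qed
  qed
qed

lemma J_main:
  fixes v :: "nat \<Rightarrow> 'a::real_inner"
  assumes "1 \<le> k"
  shows "sbf (J k v) \<and> (\<forall>y. J k v y y = 0 \<longleftrightarrow> ldf k y v)"
  using assms
proof (induction k rule: nat_induct_at_least)
  case base
  have "\<And>y. ldf 1 y v \<longleftrightarrow> y = 0" by (auto simp: ldf_def)
  then show ?case using sbf_inner by simp
next
  case (Suc n)
  have sb: "sbf (J n v)" and z: "\<forall>y. J n v y y = 0 \<longleftrightarrow> ldf n y v" using Suc.IH by auto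
  have "sbf (J (Suc n) v)" unfolding J_Suc[OF Suc(1)] by (rule sbf_stp[OF sb])
  moreover have "\<forall>y. J (Suc n) v y y = 0 \<longleftrightarrow> ldf (Suc n) y v"
    unfolding J_Suc[OF Suc(1)] using step_zero[OF sb Suc(1) z] by blast
  ultimately show ?case by blast
qed

theorem theorem2p4:
  fixes n :: nat
  assumes "2 \<le> n"
  shows "weak_n_inner_product n (iter_ip n :: (nat \<Rightarrow> 'a::real_inner) \<Rightarrow> 'a \<Rightarrow> 'a \<Rightarrow> real)"
proof -
  have it: "\<And>v. iter_ip n v = J n v" using iter_J assms by blast
  have n1: "1 \<le> n" using assms by simp
  have M: "\<And>v::nat \<Rightarrow> 'a. sbf (J n v) \<and> (\<forall>y. J n v y y = 0 \<longleftrightarrow> ldf n y v)"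
    using J_main n1 by blast
  have P2: "\<And>(v::nat \<Rightarrow> 'a) x. J n v x x = J n (v(n := x)) (v n) (v n)"
  proof -
    fix v :: "nat \<Rightarrow> 'a" and x
    define m where "m = n - 1"
    have m: "n = Suc m" "1 \<le> m" using assms by (simp_all add: m_def)
    have ind: "J m (v(Suc m := x)) = J m v" using J_indep[of m "Suc m" v x] m by simp
    have sb: "sbf (J m v)" using J_main m(2) by blast
    show "J n v x x = J n (v(n := x)) (v n) (v n)"
      using m by (simp add: J_Suc ind stp_def sbf_sym[OF sb, of x "v n"] mult.commute)
  qed
  have sb: "\<And>v::nat \<Rightarrow> 'a. sbf (J n v)" using M by blast
  have z: "\<And>(v::nat \<Rightarrow> 'a) y. J n v y y = 0 \<longleftrightarrow> lin_dep_family n y v"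
    using M ldf_eq[OF n1] by blast
  show ?thesis
    unfolding weak_n_inner_product_def it
  proof (intro conjI allI)
    show "2 \<le> n" by (rule assms)
  next
    fix v :: "nat \<Rightarrow> 'a" and x
    show "0 \<le> J n v x x" by (rule sbf_nn[OF sb])
    show "(J n v x x = 0) = lin_dep_family n x v" by (rule z)
    show "J n v x x = J n (v(n := x)) (v n) (v n)" by (rule P2)
  next
    fix v :: "nat \<Rightarrow> 'a" and x y
    show "J n v x y = J n v y x" by (rule sbf_sym[OF sb])
  next
    fix v :: "nat \<Rightarrow> 'a" and x y and a :: real
    show "J n v (a *\<^sub>R x) y = a * J n v x y" by (rule sbf_scale[OF sb])
  next
    fix v :: "nat \<Rightarrow> 'a" and x x' y
    show "J n v (x + x') y = J n v x y + J n v x' y" by (rule sbf_add[OF sb])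
  qed
qed

end
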